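(* Assume the setting below, and let $\gamma=\sup_{W_1\in V_{1,H},W_2\in V_{2,H}}\frac{(T_1W_1,T_2W_2)}{\|T_1W_1\|\,\|T_2W_2\|}$ (with $\|\cdot\|$ the $L^2(\Omega)$ norm), assumed to lie in $(0,1)$. If $$\tau^2\le 2(1-\gamma^2)\inf_{W\in V_{2,H}}\frac{\|W\|_{m_{22}}^2}{\|W\|_{a_{22}}^2+\|W\|_{c_{22}}^2},$$ then discretization scheme 2 is stable, i.e. it admits a discrete energy that is conserved from one time step to the next and is nonnegative.
   Context: Let $\Omega\subset\mathbb{R}^d$ be bounded, $\kappa>0$ a coefficient, $a(u,v)=\int_\Omega\kappa\nabla u\cdot\nabla v$, and $(\cdot,\cdot)$ the $L^2(\Omega)$ inner product. $V_{1,H},V_{2,H}$ are finite-dimensional spaces (in the paper $V_{j,H}=\prod_{k\in I_j}V_H$ for a coarse finite element space $V_H$ and a partition $I_1\sqcup I_2$ of the continua indices), with linear maps $T_{j,0},T_{j,1}$ on $V_{j,H}$ and $T_j=T_{j,0}+T_{j,1}$ (in the paper, $T_{j,0}U=\sum_K\mathbf{1}_K\sum_{k\in I_j}\phi_k^KU_k$, $T_{j,1}U=\sum_K\mathbf{1}_K\sum_{k\in I_j}\sum_m\phi_k^{K,m}\partial_{x_m}U_k$ with fixed multiscale basis functions). Bilinear forms: $m_{ij}(U,W)=(T_jU,T_iW)$, $a_{ij}(U,W)=a(T_{j,1}U,T_{i,1}W)$, $c_{ij}(U,W)=a(T_{j,0}U,T_{i,0}W)$ for $U\in V_{j,H},W\in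 V_{i,H}$; $\|W\|_{x_{22}}^2=x_{22}(W,W)$ for $x\in\{m,a,c\}$. Discretization scheme 2 (with zero source, as assumed in the paper's stability analysis), time step $\tau>0$: for $n\ge1$, for all $W_1\in V_{1,H}$, $\tfrac{1}{\tau^2} m_{11}(U_1^{n+1}-2U_1^n+U_1^{n-1},W_1)+\tfrac{1}{\tau^2} m_{12}(U_2^{n+1}-2U_2^n+U_2^{n-1},W_1)+\tfrac12 a_{11}(U_1^{n+1}+U_1^{n-1},W_1)+a_{12}(U_2^n,W_1)+\tfrac12 c_{11}(U_1^{n+1}+U_1^{n-1},W_1)+c_{12}(U_2^n,W_1)=0$, and for all $W_2\in V_{2,H}$, $\tfrac{1}{\tau^2} m_{22}(U_2^{n+1}-2U_2^n+U_2^{n-1},W_2)+\tfrac{1}{\tau^2} m_{21}(U_1^{n+1}-2U_1^n+U_1^{n-1},W_2)+a_{21}(U_1^n,W_2)+a_{22}(U_2^n,W_2)+c_{21}(U_1^n,W_2)+c_{22}(U_2^n,W_2)=0$. The infimum is over nonzero $W$. *)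

theory Defs
  imports "HOL-Analysis.Analysis"
begin

text \<open>The type 'h plays the role of L^2(Omega) (a real inner product
space, inner product = L^2 inner product), the bilinear form a(u,v) = int kappa grad u . grad v
is an abstract symmetric, positive semidefinite bilinear form on 'h.  The coarse spaces
V_{1,H}, V_{2,H} are finite-dimensional real vector spaces (euclidean_space types), and
T_{j,0}, T_{j,1} are linear maps into 'h, T_j = T_{j,0} + T_{j,1}.\<close>

text \<open>Generic form B(S U, R W): with B = inner, S = T_j, R = T_i this is m_ij(U,W);
with B = a, S = T_{j,1}, R = T_{i,1} it is a_ij(U,W); with B = a, S = T_{j,0}, R = T_{i,0}
it is c_ij(U,W).\<close>
definition bform :: "('h \<Rightarrow> 'h \<Rightarrow> real) \<Rightarrow> ('v \<Rightarrow> 'h) \<Rightarrow> ('w \<Rightarrow> 'h) \<Rightarrow> 'v \<Rightarrow> 'w \<Rightarrow> real" where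
  "bform B S R U W = B (S U) (R W)"

definition gamma_const :: "('v1 \<Rightarrow> 'h::real_inner) \<Rightarrow> ('v2 \<Rightarrow> 'h) \<Rightarrow> real" where
  "gamma_const T1 T2 = Sup {inner (T1 W1) (T2 W2) / (norm (T1 W1) * norm (T2 W2)) | W1 W2.
                               T1 W1 \<noteq> 0 \<and> T2 W2 \<noteq> 0}"

text \<open>Discretization scheme 2 (zero source), for all n >= 1.\<close>
definition scheme2 ::
  "('h::real_inner \<Rightarrow> 'h \<Rightarrow> real) \<Rightarrow> ('v1::real_vector \<Rightarrow> 'h) \<Rightarrow> ('v1 \<Rightarrow> 'h)
    \<Rightarrow> ('v2::real_vector \<Rightarrow> 'h) \<Rightarrow> ('v2 \<Rightarrow> 'h) \<Rightarrow> real
    \<Rightarrow> (nat \<Rightarrow> 'v1) \<Rightarrow> (nat \<Rightarrow> 'v2) \<Rightarrow> bool" where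
  "scheme2 a T10 T11 T20 T21 \<tau> U1 U2 \<longleftrightarrow>
    (let T1 = (\<lambda>U. T10 U + T11 U); T2 = (\<lambda>U. T20 U + T21 U) in
     \<forall>n\<ge>1.
      (\<forall>W1.
         1 / \<tau>^2 * bform inner T1 T1 (U1 (n+1) - 2 *\<^sub>R U1 n + U1 (n-1)) W1
       + 1 / \<tau>^2 * bform inner T2 T1 (U2 (n+1) - 2 *\<^sub>R U2 n + U2 (n-1)) W1
       + 1/2 * bform a T11 T11 (U1 (n+1) + U1 (n-1)) W1
       + bform a T21 T11 (U2 n) W1
       + 1/2 * bform a T10 T10 (U1 (n+1) + U1 (n-1)) W1
       + bform a T20 T10 (U2 n) W1 = 0)
    \<and> (\<forall>W2.
         1 / \<tau>^2 * bform inner T2 T2 (U2 (n+1) - 2 *\<^sub>R U2 n + U2 (n-1)) W2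
       + 1 / \<tau>^2 * bform inner T1 T2 (U1 (n+1) - 2 *\<^sub>R U1 n + U1 (n-1)) W2
       + bform a T11 T21 (U1 n) W2
       + bform a T21 T21 (U2 n) W2
       + bform a T10 T20 (U1 n) W2
       + bform a T20 T20 (U2 n) W2 = 0))"

definition energy2 ::
  "('h::real_inner \<Rightarrow> 'h \<Rightarrow> real) \<Rightarrow> ('v1::real_vector \<Rightarrow> 'h) \<Rightarrow> ('v1 \<Rightarrow> 'h)
    \<Rightarrow> ('v2::real_vector \<Rightarrow> 'h) \<Rightarrow> ('v2 \<Rightarrow> 'h) \<Rightarrow> real
    \<Rightarrow> (nat \<Rightarrow> 'v1) \<Rightarrow> (nat \<Rightarrow> 'v2) \<Rightarrow> nat \<Rightarrow> real" where
  "energy2 a T10 T11 T20 T21 \<tau> U1 U2 n =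
    (let T1 = (\<lambda>U. T10 U + T11 U); T2 = (\<lambda>U. T20 U + T21 U);
         D1 = U1 (n+1) - U1 n; D2 = U2 (n+1) - U2 n;
         k11 = (\<lambda>U W. bform a T11 T11 U W + bform a T10 T10 U W);
         k12 = (\<lambda>U W. bform a T21 T11 U W + bform a T20 T10 U W);
         k22 = (\<lambda>U W. bform a T21 T21 U W + bform a T20 T20 U W)
     in 1 / \<tau>^2 * (bform inner T1 T1 D1 D1 + bform inner T2 T1 D2 D1
                    + bform inner T1 T2 D1 D2 + bform inner T2 T2 D2 D2)
      + 1/2 * (k11 (U1 (n+1)) (U1 (n+1)) + k11 (U1 n) (U1 n))
      + k12 (U2 n) (U1 (n+1)) + k12 (U2 (n+1)) (U1 n)
      + k22 (U2 n) (U2 (n+1)))"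

end

theory Submission
  imports Defs
begin

lemma sq_ineq:
  fixes x y :: "'h::real_inner" and g :: real
  assumes "- inner x y \<le> g * (norm x * norm y)"
  shows "(1 - g^2) * inner y y \<le> inner (x + y) (x + y)"
proof -
  have "inner (x+y) (x+y) = norm x ^2 + 2 * inner x y + norm y ^2"
    by (simp add: inner_add_left inner_add_right inner_commute power2_norm_eq_inner)
  moreover have "0 \<le> (norm x - g * norm y)^2" by simp
  moreover have "inner y y = norm y ^2" by (simp add: power2_norm_eq_inner)
  ultimately show ?thesis using assms by (simp add: power2_eq_square algebra_simps)
qed

lemma gamma_bound:
  fixes T1 :: "'v1::real_vector \<Rightarrow> 'h::real_inner" and T2 :: "'v2::real_vector \<Rightarrow> 'h"
  assumes "linear T1"
  shows "- inner (T1 W1) (T2 W2) \<le> gamma_const T1 T2 * (norm (T1 W1) * norm (T2 W2))"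
proof (cases "T1 W1 = 0 \<or> T2 W2 = 0")
  case True then show ?thesis by auto
next
  case False
  let ?S = "{inner (T1 W1) (T2 W2) / (norm (T1 W1) * norm (T2 W2)) | W1 W2.
                               T1 W1 \<noteq> 0 \<and> T2 W2 \<noteq> 0}"
  have bdd: "bdd_above ?S"
  proof (rule bdd_aboveI[where M=1], clarify)
    fix A B assume "T1 A \<noteq> 0" "T2 B \<noteq> 0"
    then have "0 < norm (T1 A) * norm (T2 B)" by simp
    moreover have "inner (T1 A) (T2 B) \<le> norm (T1 A) * norm (T2 B)"
      using Cauchy_Schwarz_ineq2 abs_le_D1 by blast
    ultimately show "inner (T1 A) (T2 B) / (norm (T1 A) * norm (T2 B)) \<le> 1"
      by simp
  qed
  have T1m: "T1 (- W1) = - T1 W1" using assms by (simp add: linear_neg)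
  have "inner (T1 (-W1)) (T2 W2) / (norm (T1 (-W1)) * norm (T2 W2)) \<in> ?S"
    using False T1m by (intro CollectI exI[of _ "-W1"] exI[of _ W2]) auto
  then have "inner (T1 (-W1)) (T2 W2) / (norm (T1 (-W1)) * norm (T2 W2)) \<le> gamma_const T1 T2"
    unfolding gamma_const_def using bdd by (rule cSup_upper)
  then have "- inner (T1 W1) (T2 W2) / (norm (T1 W1) * norm (T2 W2)) \<le> gamma_const T1 T2"
    using T1m by simp
  moreover have "0 < norm (T1 W1) * norm (T2 W2)" using False by simp
  ultimately show ?thesis
    by (metis minus_divide_left pos_divide_le_eq)
qed

lemma mass_id:
  fixes S :: "'v1::real_vector \<Rightarrow> 'h::real_inner" and R :: "'v2::real_vector \<Rightarrow> 'h"
  assumes S: "linear S" and R: "linear R"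
  shows "inner (S (u2 - 2 *\<^sub>R u1 + u0)) (S (u2 - u0)) + inner (R (v2 - 2 *\<^sub>R v1 + v0)) (S (u2 - u0))
     + inner (R (v2 - 2 *\<^sub>R v1 + v0)) (R (v2 - v0)) + inner (S (u2 - 2 *\<^sub>R u1 + u0)) (R (v2 - v0))
   = (inner (S (u2-u1)) (S (u2-u1)) + inner (R (v2-v1)) (S (u2-u1)) + inner (S (u2-u1)) (R (v2-v1)) + inner (R (v2-v1)) (R (v2-v1)))
   - (inner (S (u1-u0)) (S (u1-u0)) + inner (R (v1-v0)) (S (u1-u0)) + inner (S (u1-u0)) (R (v1-v0)) + inner (R (v1-v0)) (R (v1-v0)))"
proof -
  have lin: "S (u2 - 2 *\<^sub>R u1 + u0) = S u2 - 2 *\<^sub>R S u1 + S u0" "S (u2 - u0) = S u2 - S u0"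
    "S (u2 - u1) = S u2 - S u1" "S (u1 - u0) = S u1 - S u0"
    "R (v2 - 2 *\<^sub>R v1 + v0) = R v2 - 2 *\<^sub>R R v1 + R v0" "R (v2 - v0) = R v2 - R v0"
    "R (v2 - v1) = R v2 - R v1" "R (v1 - v0) = R v1 - R v0"
    using S R by (simp_all add: linear_add linear_diff linear_cmul)
  show ?thesis unfolding lin
    by (simp add: inner_add_left inner_add_right inner_diff_left inner_diff_right inner_commute algebra_simps)
qed

lemma a_id:
  fixes S :: "'v1::real_vector \<Rightarrow> 'h::real_vector" and R :: "'v2::real_vector \<Rightarrow> 'h"
  assumes b: "bilinear (b :: 'h \<Rightarrow> 'h \<Rightarrow> real)" and bs: "\<And>x y. b x y = b y x" and S: "linear S" and R: "linear R"
  shows "1/2 * b (S (u2+u0)) (S (u2-u0)) + b (R v1) (S (u2-u0)) + b (S u1) (R (v2-v0)) + b (R v1) (R (v2-v0))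
   = (1/2 * (b (S u2) (S u2) + b (S u1) (S u1)) + b (R v1) (S u2) + b (R v2) (S u1) + b (R v1) (R v2))
   - (1/2 * (b (S u1) (S u1) + b (S u0) (S u0)) + b (R v0) (S u1) + b (R v1) (S u0) + b (R v0) (R v1))"
proof -
  have lin: "S (u2 + u0) = S u2 + S u0" "S (u2 - u0) = S u2 - S u0" "R (v2 - v0) = R v2 - R v0"
    using S R by (simp_all add: linear_add linear_diff)
  have s1: "b (S u0) (S u2) = b (S u2) (S u0)" "b (S u1) (R v2) = b (R v2) (S u1)"
     "b (S u1) (R v0) = b (R v0) (S u1)" "b (R v1) (R v0) = b (R v0) (R v1)"
    using bs by auto
  show ?thesis unfolding lin
    by (simp add: bilinear_ladd[OF b] bilinear_radd[OF b] bilinear_lsub[OF b] bilinear_rsub[OF b] s1 algebra_simps)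
qed

lemma a_split:
  fixes S :: "'v1::real_vector \<Rightarrow> 'h::real_vector" and R :: "'v2::real_vector \<Rightarrow> 'h"
  assumes b: "bilinear (b :: 'h \<Rightarrow> 'h \<Rightarrow> real)" and bs: "\<And>x y. b x y = b y x" and R: "linear R"
  shows "1/2 * (b (S p) (S p) + b (S q) (S q)) + b (R r) (S p) + b (R s) (S q) + b (R r) (R s)
    = 1/2 * b (S p + R r) (S p + R r) + 1/2 * b (S q + R s) (S q + R s) - 1/2 * b (R (s - r)) (R (s - r))"
proof -
  have lin: "R (s - r) = R s - R r" using R by (simp add: linear_diff)
  have s1: "b (S p) (R r) = b (R r) (S p)" "b (S q) (R s) = b (R s) (S q)" "b (R s) (R r) = b (R r) (R s)"
    using bs by auto
  show ?thesis unfolding lin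
    by (simp add: bilinear_ladd[OF b] bilinear_radd[OF b] bilinear_lsub[OF b] bilinear_rsub[OF b] s1 algebra_simps)
qed

lemma mass_split:
  fixes S :: "'v1::real_vector \<Rightarrow> 'h::real_inner" and R :: "'v2::real_vector \<Rightarrow> 'h"
  shows "inner (S d) (S d) + inner (R e) (S d) + inner (S d) (R e) + inner (R e) (R e) = inner (S d + R e) (S d + R e)"
  by (simp add: inner_add_left inner_add_right)

theorem theorem3:
  fixes a :: "'h::real_inner \<Rightarrow> 'h \<Rightarrow> real"
    and T10 T11 :: "'v1::euclidean_space \<Rightarrow> 'h"
    and T20 T21 :: "'v2::euclidean_space \<Rightarrow> 'h"
    and \<tau> :: real
    and U1 :: "nat \<Rightarrow> 'v1" and U2 :: "nat \<Rightarrow> 'v2"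
  assumes a_bilinear: "bilinear a"
    and a_sym: "\<And>u v. a u v = a v u"
    and a_nonneg: "\<And>u. a u u \<ge> 0"
    and lin: "linear T10" "linear T11" "linear T20" "linear T21"
    and tau_pos: "\<tau> > 0"
    and gamma: "0 < gamma_const (\<lambda>W. T10 W + T11 W) (\<lambda>W. T20 W + T21 W)"
               "gamma_const (\<lambda>W. T10 W + T11 W) (\<lambda>W. T20 W + T21 W) < 1"
    and cfl: "\<And>W. W \<noteq> 0 \<Longrightarrow>
       \<tau>^2 * (bform a T21 T21 W W + bform a T20 T20 W W)
         \<le> 2 * (1 - (gamma_const (\<lambda>W. T10 W + T11 W) (\<lambda>W. T20 W + T21 W))^2)
             * bform inner (\<lambda>W. T20 W + T21 W) (\<lambda>W. T20 W + T21 W) W W"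
    and scheme: "scheme2 a T10 T11 T20 T21 \<tau> U1 U2"
  shows "(\<forall>n\<ge>1. energy2 a T10 T11 T20 T21 \<tau> U1 U2 n = energy2 a T10 T11 T20 T21 \<tau> U1 U2 (n-1))
       \<and> (\<forall>n. energy2 a T10 T11 T20 T21 \<tau> U1 U2 n \<ge> 0)"
proof -
  note L = linear_add[OF lin(1)] linear_add[OF lin(2)] linear_add[OF lin(3)] linear_add[OF lin(4)]
    linear_diff[OF lin(1)] linear_diff[OF lin(2)] linear_diff[OF lin(3)] linear_diff[OF lin(4)]
    linear_cmul[OF lin(1)] linear_cmul[OF lin(2)] linear_cmul[OF lin(3)] linear_cmul[OF lin(4)]
  note B = bilinear_ladd[OF a_bilinear] bilinear_radd[OF a_bilinear]
    bilinear_lsub[OF a_bilinear] bilinear_rsub[OF a_bilinear]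
    bilinear_lmul[OF a_bilinear] bilinear_rmul[OF a_bilinear]
  note I = inner_add_left inner_add_right inner_diff_left inner_diff_right
    inner_scaleR_left inner_scaleR_right
  have cons: "energy2 a T10 T11 T20 T21 \<tau> U1 U2 (Suc m) = energy2 a T10 T11 T20 T21 \<tau> U1 U2 m" for m
  proof -
    have n1: "Suc m \<ge> 1" by simp
    have idx: "Suc m + 1 = Suc (Suc m)" "m + 1 = Suc m" "Suc m - 1 = m" by simp_all
    note sch = scheme[unfolded scheme2_def Let_def, rule_format, OF n1, unfolded idx]
    note e1 = conjunct1[OF sch] and e2 = conjunct2[OF sch]
    have lT1: "linear (\<lambda>U. T10 U + T11 U)" and lT2: "linear (\<lambda>U. T20 U + T21 U)"
      using lin by (simp_all add: linear_compose_add)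
    note M = mass_id[OF lT1 lT2, of "U1 (Suc (Suc m))" "U1 (Suc m)" "U1 m" "U2 (Suc (Suc m))" "U2 (Suc m)" "U2 m"]
    note A1 = a_id[OF a_bilinear a_sym lin(2) lin(4), of "U1 (Suc (Suc m))" "U1 m" "U2 (Suc m)" "U1 (Suc m)" "U2 (Suc (Suc m))" "U2 m"]
    note A0 = a_id[OF a_bilinear a_sym lin(1) lin(3), of "U1 (Suc (Suc m))" "U1 m" "U2 (Suc m)" "U1 (Suc m)" "U2 (Suc (Suc m))" "U2 m"]
    note f1 = spec[OF e1, of "U1 (Suc (Suc m)) - U1 m"]
    note f2 = spec[OF e2, of "U2 (Suc (Suc m)) - U2 m"]
    note Mc = arg_cong[where f="\<lambda>x. 1/\<tau>^2 * x", OF M]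
    show ?thesis using f1 f2 Mc A1 A0
      unfolding energy2_def Let_def bform_def idx
      by (simp only: distrib_left right_diff_distrib)
  qed
  have nn: "energy2 a T10 T11 T20 T21 \<tau> U1 U2 n \<ge> 0" for n
  proof -
    define g where "g = gamma_const (\<lambda>W. T10 W + T11 W) (\<lambda>W. T20 W + T21 W)"
    define x where "x = T10 (U1 (n+1) - U1 n) + T11 (U1 (n+1) - U1 n)"
    define y where "y = T20 (U2 (n+1) - U2 n) + T21 (U2 (n+1) - U2 n)"
    define d where "d = U2 (n+1) - U2 n"
    have lT1: "linear (\<lambda>U. T10 U + T11 U)"
      using lin by (simp_all add: linear_compose_add)
    have Ms: "inner x y + inner y x + inner x x + inner y y = inner (x+y) (x+y)"
      by (simp add: inner_add_left inner_add_right)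
    have gb: "- inner x y \<le> g * (norm x * norm y)"
      unfolding x_def y_def g_def by (rule gamma_bound[OF lT1])
    have mi: "(1 - g^2) * inner y y \<le> inner (x+y) (x+y)" by (rule sq_ineq[OF gb])
    have k22: "\<tau>^2 * (a (T21 d) (T21 d) + a (T20 d) (T20 d)) \<le> 2 * (1 - g^2) * inner y y"
    proof (cases "d = 0")
      case True
      then show ?thesis using bilinear_lzero[OF a_bilinear] linear_0[OF lin(3)] linear_0[OF lin(4)]
        by (simp add: y_def d_def)
    next
      case False
      then show ?thesis using cfl[OF False] by (simp add: bform_def g_def y_def d_def)
    qed
    have c1: "1/2 * (a (T21 d) (T21 d) + a (T20 d) (T20 d)) \<le> 1/\<tau>^2 * inner (x+y) (x+y)"
    proof -
      have "\<tau>^2 * (a (T21 d) (T21 d) + a (T20 d) (T20 d)) \<le> 2 * inner (x+y) (x+y)"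
        using k22 mi by linarith
      then show ?thesis using tau_pos by (simp add: field_simps)
    qed
    note A1 = a_split[OF a_bilinear a_sym lin(4), of T11 "U1 (n+1)" "U1 n" "U2 n" "U2 (n+1)"]
    note A0 = a_split[OF a_bilinear a_sym lin(3), of T10 "U1 (n+1)" "U1 n" "U2 n" "U2 (n+1)"]
    have p: "a v v \<ge> 0" for v using a_nonneg by simp
    note p1 = p[of "T11 (U1 (n+1)) + T21 (U2 n)"] p[of "T11 (U1 n) + T21 (U2 (n+1))"]
      p[of "T10 (U1 (n+1)) + T20 (U2 n)"] p[of "T10 (U1 n) + T20 (U2 (n+1))"]
    have E: "energy2 a T10 T11 T20 T21 \<tau> U1 U2 n = 1/\<tau>^2 * inner (x+y) (x+y)
      + (1/2 * (a (T11 (U1 (n+1))) (T11 (U1 (n+1))) + a (T11 (U1 n)) (T11 (U1 n))) + a (T21 (U2 n)) (T11 (U1 (n+1))) + a (T21 (U2 (n+1))) (T11 (U1 n)) + a (T21 (U2 n)) (T21 (U2 (n+1))))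
      + (1/2 * (a (T10 (U1 (n+1))) (T10 (U1 (n+1))) + a (T10 (U1 n)) (T10 (U1 n))) + a (T20 (U2 n)) (T10 (U1 (n+1))) + a (T20 (U2 (n+1))) (T10 (U1 n)) + a (T20 (U2 n)) (T20 (U2 (n+1))))"
      unfolding energy2_def Let_def bform_def Ms[symmetric] x_def y_def
      by (simp add: algebra_simps)
    show ?thesis unfolding E A1 A0 using c1 p1 d_def by (simp add: field_simps)
  qed
  show ?thesis using cons nn by (metis Suc_diff_1 less_le_trans zero_less_one)
qed

end
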